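(* Let $\mathcal{H}$ be a hierarchical generator with lineage $\mathcal{L}$. Among all absorbing hierarchical generators $\mathcal{H}_*$ whose lineage $\mathcal{L}_*$ contains $\mathcal{L}$, there is a least one $\tilde{\mathcal{H}}$, with lineage $\tilde{\mathcal{L}}$, in the sense that $\tilde{\mathcal{L}}\subset\mathcal{L}_*$ for every such $\mathcal{H}_*$. Moreover, with $\mathcal{R}=\tilde{\mathcal{L}}\setminus\mathcal{L}$: (i) every $\psi\in\mathcal{R}$ satisfies $\mathbb{I}(\psi)\subset\mathbb{I}(\mathcal{L}^{\ell_\psi})$; (ii) $\mathrm{depth}(\tilde{\mathcal{L}})=\mathrm{depth}(\mathcal{L})$; (iii) for every $\psi\in\mathcal{R}$ there is $k>0$ with $\mathcal{O}(\psi,k,\mathcal{H})\neq\emptyset$.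
   Context: Fix integers $d\ge1$, $n\ge2$, $m\ge2$; $s=n-1$, $p=m-1$. B-splines $\varphi^\ell_{\vec i}(\vec x)=\prod_kQ(n^\ell x_k-i_k)$ for $\ell\ge0$, $\vec i\in\mathbb{Z}^d$, $Q$ the uniform B-spline of order $m$ with knots $0,\dots,m$; $\mathfrak{B}$ the set of all of them, $\ell_\varphi$ the level; $\mathcal{B}^0=\{\varphi^0_{\vec i}:\vec i\in[-p:0]^d\}$. Children $\mathrm{ch}(\varphi^\ell_{\vec i})=\{\varphi^{\ell+1}_{\vec k}:n\vec i\le\vec k\le n\vec i+sm\}$, extended to sets by union. Cells $I^\ell_{\vec i}=\prod_k[i_kn^{-\ell},(i_k+1)n^{-\ell})$, cell children $\mathrm{ch}(I^\ell_{\vec i})=\{I^{\ell+1}_{\vec k}:n\vec i\le\vec k\le n\vec i+s\}$, $\mathrm{ch}^k$ iterated, $\mathrm{ch}^{-k}(I)=\{J:I\in\mathrm{ch}^k(J)\}$. Cell support $\mathbb{I}(\varphi^\ell_{\vec i})=\{I^\ell_{\vec k}:\vec i\le\vec k\le\vec i+p\}$, $\mathbb{I}^k(\varphi)=\mathrm{ch}^k(\mathbb{I}(\varphi))$ for $k\in\mathbb{Z}$, $\mathbb{B}^k(I)=\{\varphi\in\mathfrak{B}:I\in\mathbb{I}^{-k}(\varphi)\}$, all extended to sets by union; $\mathcal{O}(\psi,k,\mathcal{H})=\mathbb{B}^k(\mathbb{I}(\psi))\cap\mathcal{H}$. A lineage is a finite $\mathcal{L}\subset\mathfrak{B}$ with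 $\mathcal{L}\subset\mathcal{B}^0\cup\mathrm{ch}(\mathcal{L})$; its hierarchical generator is $\mathcal{H}=(\mathcal{B}^0\cup\mathrm{ch}(\mathcal{L}))\setminus\mathcal{L}$ (the lineage is uniquely determined by the generator). $\mathcal{L}^\ell$ is the set of level-$\ell$ elements of $\mathcal{L}$, and $\mathrm{depth}(\mathcal{L})=\min\{\ell:\mathcal{L}^\ell=\emptyset\}$. $\mathcal{H}$ is absorbing if there is no $\varphi\in\mathcal{H}$ with $\mathbb{I}(\varphi)\subset\mathbb{I}(\mathcal{L})$. *)

theory Defs
  imports Main
begin

text \<open>Index vectors in Z^d are functions 'd \<Rightarrow> int for a finite type 'd (d = CARD('d) \<ge> 1).
 A B-spline phi^l_i is identified with its pair (l, i); a cell I^l_i likewise with (l, i).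
 The parameters n (refinement factor) and m (spline order) are explicit arguments;
 s = n - 1 and p = m - 1.\<close>

type_synonym 'd bspl = "nat \<times> ('d \<Rightarrow> int)"
type_synonym 'd cell = "nat \<times> ('d \<Rightarrow> int)"

definition lvl :: "'d bspl \<Rightarrow> nat" where "lvl \<phi> = fst \<phi>"

definition B0 :: "nat \<Rightarrow> ('d::finite) bspl set" where
  "B0 m = {(0, i) | i. \<forall>j. - (int m - 1) \<le> i j \<and> i j \<le> 0}"

definition bch :: "nat \<Rightarrow> nat \<Rightarrow> ('d::finite) bspl \<Rightarrow> 'd bspl set" where
  "bch n m \<phi> = {(Suc (fst \<phi>), k) | k. \<forall>j. int n * snd \<phi> j \<le> k j
        \<and> k j \<le> int n * snd \<phi> j + (int n - 1) * int m}"

definition bchs :: "nat \<Rightarrow> nat \<Rightarrow> ('d::finite) bspl set \<Rightarrow> 'd bspl set" where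
  "bchs n m S = (\<Union>\<phi>\<in>S. bch n m \<phi>)"

definition cch :: "nat \<Rightarrow> ('d::finite) cell \<Rightarrow> 'd cell set" where
  "cch n I = {(Suc (fst I), k) | k. \<forall>j. int n * snd I j \<le> k j
        \<and> k j \<le> int n * snd I j + (int n - 1)}"

definition cchs :: "nat \<Rightarrow> ('d::finite) cell set \<Rightarrow> 'd cell set" where
  "cchs n S = (\<Union>I\<in>S. cch n I)"

fun cchk :: "nat \<Rightarrow> nat \<Rightarrow> ('d::finite) cell set \<Rightarrow> 'd cell set" where
  "cchk n 0 S = S"
| "cchk n (Suc k) S = cchs n (cchk n k S)"

definition cpark :: "nat \<Rightarrow> nat \<Rightarrow> ('d::finite) cell set \<Rightarrow> 'd cell set" where
  "cpark n k S = {J. \<exists>I\<in>S. I \<in> cchk n k {J}}"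

definition csupp :: "nat \<Rightarrow> ('d::finite) bspl \<Rightarrow> 'd cell set" where
  "csupp m \<phi> = {(fst \<phi>, k) | k. \<forall>j. snd \<phi> j \<le> k j \<and> k j \<le> snd \<phi> j + (int m - 1)}"

definition csupps :: "nat \<Rightarrow> ('d::finite) bspl set \<Rightarrow> 'd cell set" where
  "csupps m S = (\<Union>\<phi>\<in>S. csupp m \<phi>)"

definition csuppk :: "nat \<Rightarrow> nat \<Rightarrow> int \<Rightarrow> ('d::finite) bspl \<Rightarrow> 'd cell set" where
  "csuppk n m k \<phi> = (if 0 \<le> k then cchk n (nat k) (csupp m \<phi>)
                      else cpark n (nat (- k)) (csupp m \<phi>))"

definition Bk :: "nat \<Rightarrow> nat \<Rightarrow> int \<Rightarrow> ('d::finite) cell set \<Rightarrow> 'd bspl set" where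
  "Bk n m k S = {\<phi>. \<exists>I\<in>S. I \<in> csuppk n m (- k) \<phi>}"

definition overlap :: "nat \<Rightarrow> nat \<Rightarrow> ('d::finite) bspl \<Rightarrow> int \<Rightarrow> 'd bspl set \<Rightarrow> 'd bspl set" where
  "overlap n m \<psi> k H = Bk n m k (csupp m \<psi>) \<inter> H"

definition lineage :: "nat \<Rightarrow> nat \<Rightarrow> ('d::finite) bspl set \<Rightarrow> bool" where
  "lineage n m L \<longleftrightarrow> finite L \<and> L \<subseteq> B0 m \<union> bchs n m L"

definition hgen :: "nat \<Rightarrow> nat \<Rightarrow> ('d::finite) bspl set \<Rightarrow> 'd bspl set" where
  "hgen n m L = (B0 m \<union> bchs n m L) - L"

definition absorbing :: "nat \<Rightarrow> nat \<Rightarrow> ('d::finite) bspl set \<Rightarrow> 'd bspl set \<Rightarrow> bool" where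
  "absorbing n m H L \<longleftrightarrow> \<not> (\<exists>\<phi>\<in>H. csupp m \<phi> \<subseteq> csupps m L)"

definition levelset :: "('d::finite) bspl set \<Rightarrow> nat \<Rightarrow> 'd bspl set" where
  "levelset L l = {\<phi>\<in>L. lvl \<phi> = l}"

definition depth :: "('d::finite) bspl set \<Rightarrow> nat" where
  "depth L = (LEAST l. levelset L l = {})"

end

theory Submission
  imports Defs "HOL-Library.FuncSet"
begin

inductive_set absclo :: "nat \<Rightarrow> nat \<Rightarrow> ('d::finite) bspl set \<Rightarrow> 'd bspl set" for n m L where
  base: "\<phi> \<in> L \<Longrightarrow> \<phi> \<in> absclo n m L"
| step0: "\<lbrakk>\<phi> \<in> B0 m; csupp m \<phi> \<subseteq> csupps m L\<rbrakk> \<Longrightarrow> \<phi> \<in> absclo n m L"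
| stepc: "\<lbrakk>\<psi> \<in> absclo n m L; \<phi> \<in> bch n m \<psi>; csupp m \<phi> \<subseteq> csupps m L\<rbrakk>
          \<Longrightarrow> \<phi> \<in> absclo n m L"

lemma self_in_csupp: "m \<ge> 1 \<Longrightarrow> \<phi> \<in> csupp m \<phi>"
  by (cases \<phi>) (auto simp: csupp_def)

lemma fst_csupp: "x \<in> csupp m \<phi> \<Longrightarrow> fst x = fst \<phi>"
  by (auto simp: csupp_def)

lemma finite_csupp: "finite (csupp m (\<phi>::('d::finite) bspl))"
proof -
  have "{k::'d\<Rightarrow>int. \<forall>j. snd \<phi> j \<le> k j \<and> k j \<le> snd \<phi> j + (int m - 1)}
      = PiE UNIV (\<lambda>j. {snd \<phi> j .. snd \<phi> j + (int m - 1)})"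
    by (auto simp: PiE_UNIV_domain Pi_def)
  hence "finite {k::'d\<Rightarrow>int. \<forall>j. snd \<phi> j \<le> k j \<and> k j \<le> snd \<phi> j + (int m - 1)}"
    by (simp add: finite_PiE)
  moreover have "csupp m \<phi> = (\<lambda>k. (fst \<phi>, k)) ` {k::'d\<Rightarrow>int. \<forall>j. snd \<phi> j \<le> k j \<and> k j \<le> snd \<phi> j + (int m - 1)}"
    by (auto simp: csupp_def)
  ultimately show ?thesis by simp
qed

lemma cchs_mono: "A \<subseteq> B \<Longrightarrow> cchs n A \<subseteq> cchs n B"
  by (auto simp: cchs_def)

lemma cchk_mono: "A \<subseteq> B \<Longrightarrow> cchk n k A \<subseteq> cchk n k B"
  by (induction k) (auto intro: cchs_mono[THEN subsetD])

lemma cchk_shift: "cchk n k (cchs n S) = cchs n (cchk n k S)"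
  by (induction k) auto

lemma child_lemma:
  assumes "n \<ge> 1" "m \<ge> 1" "(l, j) \<in> csupp m \<chi>"
  shows "\<exists>\<chi>1 \<in> bch n m \<chi>. (Suc l, \<lambda>d. int n * j d) \<in> csupp m \<chi>1
           \<and> (Suc l, \<lambda>d. int n * j d) \<in> cch n (l, j)"
proof -
  have l: "l = fst \<chi>" and jb: "\<And>d. snd \<chi> d \<le> j d \<and> j d \<le> snd \<chi> d + (int m - 1)"
    using assms(3) by (auto simp: csupp_def)
  define k where "k = (\<lambda>d. max (int n * snd \<chi> d) (int n * j d - (int m - 1)))"
  have nn: "int n \<ge> 1" using assms by simp
  have A: "int n * snd \<chi> d \<le> k d \<and> k d \<le> int n * snd \<chi> d + (int n - 1) * int m" for d
  proof -
    have "int n * j d \<le> int n * (snd \<chi> d + (int m - 1))"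
      using jb[of d] nn by (intro mult_left_mono) auto
    hence "int n * j d - (int m - 1) \<le> int n * snd \<chi> d + (int n - 1) * int m"
      using nn assms by (simp add: algebra_simps)
    moreover have "0 \<le> (int n - 1) * int m" using nn by simp
    ultimately show ?thesis unfolding k_def by auto
  qed
  have B: "k d \<le> int n * j d \<and> int n * j d \<le> k d + (int m - 1)" for d
  proof -
    have "int n * snd \<chi> d \<le> int n * j d" using jb[of d] nn by (intro mult_left_mono) auto
    thus ?thesis unfolding k_def using assms by auto
  qed
  have "(Suc (fst \<chi>), k) \<in> bch n m \<chi>" using A by (auto simp: bch_def)
  moreover have "(Suc l, \<lambda>d. int n * j d) \<in> csupp m (Suc (fst \<chi>), k)"
    using B l by (auto simp: csupp_def)
  moreover have "(Suc l, \<lambda>d. int n * j d) \<in> cch n (l, j)"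
    using nn by (auto simp: cch_def)
  ultimately show ?thesis by blast
qed

lemma descend:
  assumes fin: "finite L" and n1: "n \<ge> 1" and m1: "m \<ge> 1"
  shows "\<chi> \<in> L \<Longrightarrow> I \<in> csupp m \<chi> \<Longrightarrow>
     \<exists>k\<ge>1. \<exists>\<phi>\<in>hgen n m L. \<exists>J\<in>csupp m \<phi>. J \<in> cchk n k {I}"
proof (induction \<chi> arbitrary: I rule: measure_induct_rule[where f="\<lambda>\<chi>. Suc (Max (lvl ` L)) - lvl \<chi>"])
  case (less \<chi>)
  obtain l j where I: "I = (l, j)" by (cases I)
  from child_lemma[OF n1 m1, of l j \<chi>] less.prems I obtain \<chi>1 where
    c1: "\<chi>1 \<in> bch n m \<chi>" and J1: "(Suc l, \<lambda>d. int n * j d) \<in> csupp m \<chi>1"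
    and J1c: "(Suc l, \<lambda>d. int n * j d) \<in> cch n I" by auto
  have sub: "{(Suc l, \<lambda>d. int n * j d)} \<subseteq> cchs n {I}" using J1c by (auto simp: cchs_def)
  show ?case
  proof (cases "\<chi>1 \<in> L")
    case False
    have "\<chi>1 \<in> hgen n m L" using False c1 less.prems by (auto simp: hgen_def bchs_def)
    moreover have "(Suc l, \<lambda>d. int n * j d) \<in> cchk n 1 {I}" using sub by simp
    ultimately show ?thesis using J1 by blast
  next
    case True
    have lv: "lvl \<chi>1 = Suc (lvl \<chi>)" using c1 by (auto simp: bch_def lvl_def)
    have "lvl \<chi>1 \<le> Max (lvl ` L)" using True fin by simp
    hence "Suc (Max (lvl ` L)) - lvl \<chi>1 < Suc (Max (lvl ` L)) - lvl \<chi>" using lv by simp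
    from less.IH[OF this True J1] obtain k \<phi> J where
      k: "k \<ge> 1" "\<phi> \<in> hgen n m L" "J \<in> csupp m \<phi>" "J \<in> cchk n k {(Suc l, \<lambda>d. int n * j d)}"
      by blast
    have "J \<in> cchk n (Suc k) {I}"
      using cchk_mono[OF sub, where n=n and k=k] k(4) by (auto simp: cchk_shift)
    thus ?thesis using k by (intro exI[of _ "Suc k"]) auto
  qed
qed

theorem lemma6p10:
  fixes n m :: nat and L :: "('d::finite) bspl set"
  assumes "n \<ge> 2" and "m \<ge> 2"
    and "lineage n m L"
  shows "\<exists>Lt. lineage n m Lt \<and> L \<subseteq> Lt \<and> absorbing n m (hgen n m Lt) Lt
     \<and> (\<forall>Ls. lineage n m Ls \<and> L \<subseteq> Ls \<and> absorbing n m (hgen n m Ls) Ls \<longrightarrow> Lt \<subseteq> Ls)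
     \<and> (\<forall>\<psi>\<in>Lt - L. csupp m \<psi> \<subseteq> csupps m (levelset L (lvl \<psi>)))
     \<and> depth Lt = depth L
     \<and> (\<forall>\<psi>\<in>Lt - L. \<exists>k::int. k > 0 \<and> overlap n m \<psi> k (hgen n m L) \<noteq> {})"
proof -
  let ?Lt = "absclo n m L"
  have n1: "n \<ge> 1" and m1: "m \<ge> 1" using assms by auto
  have finL: "finite L" and linL: "L \<subseteq> B0 m \<union> bchs n m L"
    using assms(3) by (auto simp: lineage_def)
  have LLt: "L \<subseteq> ?Lt" by (auto intro: absclo.base)
  have cov: "\<psi> \<in> ?Lt \<Longrightarrow> csupp m \<psi> \<subseteq> csupps m L" for \<psi>
    by (induction rule: absclo.induct) (auto simp: csupps_def)
  have new: "\<psi> \<in> ?Lt \<Longrightarrow> \<psi> \<notin> L \<Longrightarrow> csupp m \<psi> \<subseteq> csupps m L" for \<psi>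
    using cov by blast
  have csEq: "csupps m ?Lt = csupps m L"
    using cov LLt by (auto simp: csupps_def)
  have finC: "finite (csupps m L)"
    using finL by (auto simp: csupps_def finite_csupp)
  have "?Lt \<subseteq> L \<union> csupps m L"
    using cov self_in_csupp[OF m1] by blast
  hence finLt: "finite ?Lt" using finL finC by (meson finite_Un finite_subset)
  have bm: "bchs n m L \<subseteq> bchs n m ?Lt" using LLt by (auto simp: bchs_def)
  have "?Lt \<subseteq> B0 m \<union> bchs n m ?Lt"
  proof
    fix \<phi> assume "\<phi> \<in> ?Lt"
    thus "\<phi> \<in> B0 m \<union> bchs n m ?Lt"
    proof (cases rule: absclo.cases)
      case base thus ?thesis using linL bm by blast
    next
      case step0 thus ?thesis by (auto simp: bchs_def)
    next
      case stepc thus ?thesis by (auto simp: bchs_def)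
    qed
  qed
  hence linLt: "lineage n m ?Lt" using finLt by (simp add: lineage_def)
  have absLt: "absorbing n m (hgen n m ?Lt) ?Lt"
    unfolding absorbing_def
  proof
    assume "\<exists>\<phi>\<in>hgen n m ?Lt. csupp m \<phi> \<subseteq> csupps m ?Lt"
    then obtain \<phi> where p: "\<phi> \<in> hgen n m ?Lt" "csupp m \<phi> \<subseteq> csupps m L" using csEq by auto
    hence "\<phi> \<in> B0 m \<or> (\<exists>\<psi>\<in>?Lt. \<phi> \<in> bch n m \<psi>)" "\<phi> \<notin> ?Lt"
      by (auto simp: hgen_def bchs_def)
    thus False using p(2) absclo.step0 absclo.stepc by blast
  qed
  have minimal: "?Lt \<subseteq> Ls" if "lineage n m Ls" "L \<subseteq> Ls" "absorbing n m (hgen n m Ls) Ls" for Ls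
  proof
    fix \<phi> assume "\<phi> \<in> ?Lt"
    thus "\<phi> \<in> Ls"
    proof (induction rule: absclo.induct)
      case (base \<phi>) thus ?case using that by blast
    next
      case (step0 \<phi>)
      have "csupps m L \<subseteq> csupps m Ls" using that(2) by (auto simp: csupps_def)
      hence c: "csupp m \<phi> \<subseteq> csupps m Ls" using step0 by blast
      show ?case
      proof (rule ccontr)
        assume "\<phi> \<notin> Ls"
        hence "\<phi> \<in> hgen n m Ls" using step0 by (auto simp: hgen_def bchs_def)
        thus False using c that(3) by (auto simp: absorbing_def)
      qed
    next
      case (stepc \<psi> \<phi>)
      have "csupps m L \<subseteq> csupps m Ls" using that(2) by (auto simp: csupps_def)
      hence c: "csupp m \<phi> \<subseteq> csupps m Ls" using stepc by blast
      show ?case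
      proof (rule ccontr)
        assume "\<phi> \<notin> Ls"
        hence "\<phi> \<in> hgen n m Ls" using stepc by (auto simp: hgen_def bchs_def)
        thus False using c that(3) by (auto simp: absorbing_def)
      qed
    qed
  qed
  have lev: "\<forall>\<psi>\<in>?Lt - L. csupp m \<psi> \<subseteq> csupps m (levelset L (lvl \<psi>))"
  proof (intro ballI subsetI)
    fix \<psi> x assume "\<psi> \<in> ?Lt - L" "x \<in> csupp m \<psi>"
    hence "x \<in> csupps m L" using new by blast
    then obtain \<chi> where "\<chi> \<in> L" "x \<in> csupp m \<chi>" unfolding csupps_def by blast
    moreover have "fst x = fst \<psi>" "fst x = fst \<chi>" using \<open>x \<in> csupp m \<psi>\<close> calculation
      by (auto dest: fst_csupp)
    hence "\<chi> \<in> levelset L (lvl \<psi>)" using calculation by (simp add: levelset_def lvl_def)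
    thus "x \<in> csupps m (levelset L (lvl \<psi>))"
      using calculation unfolding csupps_def by blast
  qed
  have "levelset ?Lt l = {} \<longleftrightarrow> levelset L l = {}" for l
  proof
    assume e: "levelset ?Lt l = {}"
    show "levelset L l = {}" using e LLt by (auto simp: levelset_def)
  next
    assume e: "levelset L l = {}"
    show "levelset ?Lt l = {}"
    proof (rule ccontr)
      assume "levelset ?Lt l \<noteq> {}"
      then obtain \<psi> where ps: "\<psi> \<in> ?Lt" "lvl \<psi> = l" by (auto simp: levelset_def)
      have "\<psi> \<notin> L" using ps e unfolding levelset_def by blast
      hence "\<psi> \<in> csupps m (levelset L (lvl \<psi>))" using lev ps self_in_csupp[OF m1] by blast
      hence "\<psi> \<in> csupps m (levelset L l)" using ps(2) by simp
      thus False using e unfolding csupps_def by simp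
    qed
  qed
  hence dep: "depth ?Lt = depth L" by (simp add: depth_def)
  have ov: "\<forall>\<psi>\<in>?Lt - L. \<exists>k::int. k > 0 \<and> overlap n m \<psi> k (hgen n m L) \<noteq> {}"
  proof
    fix \<psi> assume ps: "\<psi> \<in> ?Lt - L"
    have "\<psi> \<in> csupps m L" using new ps self_in_csupp[OF m1, of \<psi>] by blast
    then obtain \<chi> where "\<chi> \<in> L" "\<psi> \<in> csupp m \<chi>"
      unfolding csupps_def by blast
    from descend[OF finL n1 m1 this] obtain k \<phi> J where
      k: "k \<ge> 1" "\<phi> \<in> hgen n m L" "J \<in> csupp m \<phi>" "J \<in> cchk n k {\<psi>}" by blast
    have "\<psi> \<in> cpark n k (csupp m \<phi>)" using k(3,4) unfolding cpark_def by blast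
    hence "\<psi> \<in> csuppk n m (- int k) \<phi>" using k(1) unfolding csuppk_def by simp
    hence "\<phi> \<in> Bk n m (int k) (csupp m \<psi>)"
      using self_in_csupp[OF m1, of \<psi>] unfolding Bk_def by blast
    hence "\<phi> \<in> overlap n m \<psi> (int k) (hgen n m L)"
      using k(2) unfolding overlap_def by blast
    thus "\<exists>k::int. k > 0 \<and> overlap n m \<psi> k (hgen n m L) \<noteq> {}"
      using k(1) by (intro exI[of _ "int k"]) auto
  qed
  show ?thesis
    apply (rule exI[of _ ?Lt])
    using linLt LLt absLt minimal lev dep ov by simp
qed

end
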